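(* Let $t\in\mathbb Z$ and $k\ge0$, and let $W_t(|t|+2k)$ be the cell module of ${\mathbb{TLB}}_{|t|+2k}(q,Q)$ indexed by $t$. Then $$\dim W_t(|t|+2k)=\binom{|t|+2k}{k}.$$
   Context: Temperley–Lieb diagrams $t\to s$ have $t$ bottom and $s$ top points of a rectangle joined in pairs by non-crossing arcs; the leftmost region is the region adjacent to the left edge; marked diagrams may carry at most one mark (dot) on each arc bounding the leftmost region. ${\mathbb{TLB}}_n(q,Q)$ is the algebra with basis the marked diagrams $n\to n$ (no loops), multiplied by concatenation with the rules: unmarked loop $\mapsto -(q+q^{-1})$, loop with one mark $\mapsto \frac qQ+\frac Qq$, an arc with two marks equals $-(Q+Q^{-1})$ times the arc with one mark. For $t\in\Lambda_B(n)=\{t: |t|\le n,\ t\equiv n\pmod 2\}$, the cell module $W_t(n)$ (for the cellular basis $C^t_{S,T}$ given by $D_2^*D_1$ for $t\ge0$ and $D_2^*(C_0\otimes I^{\otimes(|t|-1)})D_1$ for $t<0$) is the free module with basis the set $M(t)$ of monic diagrams $|t|\to n$ (i.e. with $|t|$ through strings) in which no through string is marked, with the induced action of ${\mathbb{TLB}}_n(q,Q)$. Here $C_0$ is a marked vertical strand, $I$ an unmarked one, $D^*$ the horizontal reflection of $D$. *)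

theory Defs
  imports Main
begin

text \<open>Boundary points of a Temperley--Lieb diagram with m bottom and n top points.
  Bot i is the (i+1)-st bottom point from the left, Top j the (j+1)-st top point.\<close>
datatype pt = Bot nat | Top nat

definition tl_points :: "nat \<Rightarrow> nat \<Rightarrow> pt set" where
  "tl_points m n = Bot ` {..<m} \<union> Top ` {..<n}"

text \<open>Position of a boundary point when the boundary of the rectangle is cut open at
  the left edge: top points left to right (0..n-1), then bottom points right to left
  (n..n+m-1). The left edge lies between the last and the first position.\<close>
fun tl_pos :: "nat \<Rightarrow> nat \<Rightarrow> pt \<Rightarrow> nat" where
  "tl_pos m n (Top j) = j"
| "tl_pos m n (Bot i) = n + (m - 1 - i)"

definition arc_lo :: "nat \<Rightarrow> nat \<Rightarrow> pt set \<Rightarrow> nat" where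
  "arc_lo m n e = Min (tl_pos m n ` e)"

definition arc_hi :: "nat \<Rightarrow> nat \<Rightarrow> pt set \<Rightarrow> nat" where
  "arc_hi m n e = Max (tl_pos m n ` e)"

definition arcs_cross :: "nat \<Rightarrow> nat \<Rightarrow> pt set \<Rightarrow> pt set \<Rightarrow> bool" where
  "arcs_cross m n e f \<longleftrightarrow>
     arc_lo m n e < arc_lo m n f \<and> arc_lo m n f < arc_hi m n e \<and> arc_hi m n e < arc_hi m n f"

text \<open>Arc e lies strictly inside arc f, i.e. f separates e from the left edge.\<close>
definition arc_nested_in :: "nat \<Rightarrow> nat \<Rightarrow> pt set \<Rightarrow> pt set \<Rightarrow> bool" where
  "arc_nested_in m n e f \<longleftrightarrow> arc_lo m n f < arc_lo m n e \<and> arc_hi m n e < arc_hi m n f"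

definition tl_diagram :: "nat \<Rightarrow> nat \<Rightarrow> pt set set \<Rightarrow> bool" where
  "tl_diagram m n D \<longleftrightarrow>
     (\<forall>e\<in>D. e \<subseteq> tl_points m n \<and> card e = 2) \<and>
     (\<forall>p\<in>tl_points m n. \<exists>!e. e \<in> D \<and> p \<in> e) \<and>
     (\<forall>e\<in>D. \<forall>f\<in>D. \<not> arcs_cross m n e f)"

text \<open>An arc bounds the leftmost region iff no other arc separates it from the left edge.\<close>
definition bounds_leftmost :: "nat \<Rightarrow> nat \<Rightarrow> pt set set \<Rightarrow> pt set \<Rightarrow> bool" where
  "bounds_leftmost m n D e \<longleftrightarrow> e \<in> D \<and> \<not> (\<exists>f\<in>D. arc_nested_in m n e f)"

definition through_string :: "pt set \<Rightarrow> bool" where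
  "through_string e \<longleftrightarrow> (\<exists>i j. e = {Bot i, Top j})"

text \<open>Marked diagram m \<rightarrow> n: a diagram D together with the set X of its marked arcs
  (at most one mark per arc), only arcs bounding the leftmost region being markable.\<close>
definition marked_diagram :: "nat \<Rightarrow> nat \<Rightarrow> pt set set \<times> pt set set \<Rightarrow> bool" where
  "marked_diagram m n DX \<longleftrightarrow>
     tl_diagram m n (fst DX) \<and> snd DX \<subseteq> {e. bounds_leftmost m n (fst DX) e}"

text \<open>M(t): monic marked diagrams |t| \<rightarrow> n (exactly |t| through strings) with no
  through string marked. This is the basis of the cell module W_t(n).\<close>
definition cell_basis :: "int \<Rightarrow> nat \<Rightarrow> (pt set set \<times> pt set set) set" where
  "cell_basis t n = {DX. marked_diagram (nat \<bar>t\<bar>) n DX \<and>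
       card {e \<in> fst DX. through_string e} = nat \<bar>t\<bar> \<and>
       (\<forall>e\<in>snd DX. \<not> through_string e)}"

text \<open>W_t(n) is the free module with basis M(t); its dimension (rank) is card M(t).\<close>
definition cell_module_dim :: "int \<Rightarrow> nat \<Rightarrow> nat" where
  "cell_module_dim t n = card (cell_basis t n)"

end

theory Submission
  imports Defs
begin


definition crs :: "nat set \<Rightarrow> nat set \<Rightarrow> bool" where
  "crs e f \<longleftrightarrow> Min e < Min f \<and> Min f < Max e \<and> Max e < Max f"
definition nst :: "nat set \<Rightarrow> nat set \<Rightarrow> bool" where
  "nst e f \<longleftrightarrow> Min f < Min e \<and> Max e < Max f"
definition pmo :: "nat set \<Rightarrow> nat set set \<Rightarrow> bool" where
  "pmo P M \<longleftrightarrow> (\<forall>e\<in>M. e \<subseteq> P \<and> card e = 2) \<and> (\<forall>p\<in>P. \<exists>!e. e \<in> M \<and> p \<in> e)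
     \<and> (\<forall>e\<in>M. \<forall>f\<in>M. \<not> crs e f)"
definition SS :: "nat set \<Rightarrow> nat set \<Rightarrow> (nat set set \<times> nat set set) set" where
  "SS P T = {(M,X). pmo P M \<and> (\<forall>e\<in>M. e \<inter> T \<noteq> {}) \<and>
      X \<subseteq> {e\<in>M. e \<subseteq> T \<and> \<not>(\<exists>f\<in>M. nst e f)}}"
definition W :: "nat \<Rightarrow> nat \<Rightarrow> nat" where "W m n = card (SS {..<n+m} {..<n})"

lemma two_elem: "card (e::nat set) = 2 \<Longrightarrow> \<exists>x y. x < y \<and> e = {x,y}"
  by (auto simp: card_2_iff) (metis insert_commute linorder_neqE_nat)

lemma crs_pair: "x < y \<Longrightarrow> u < v \<Longrightarrow> crs {x,y} {u,v} \<longleftrightarrow> x < u \<and> u < y \<and> y < v"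
  by (simp add: crs_def)
lemma nst_pair: "x < y \<Longrightarrow> u < v \<Longrightarrow> nst {x,y} {u,v} \<longleftrightarrow> u < x \<and> y < v"
  by (simp add: nst_def)

lemma SS_finite: "finite P \<Longrightarrow> finite (SS P T)"
  by (rule finite_subset[of _ "Pow (Pow P) \<times> Pow (Pow P)"]) (auto simp: SS_def pmo_def)

lemma pmo_unique: "pmo P M \<Longrightarrow> e \<in> M \<Longrightarrow> f \<in> M \<Longrightarrow> p \<in> e \<Longrightarrow> p \<in> f \<Longrightarrow> e = f"
  unfolding pmo_def by blast

lemma sm_Min: assumes "strict_mono_on P f" "e \<subseteq> P" "finite e" "e \<noteq> {}"
  shows "Min (f`e) = f (Min e)" "Max (f`e) = f (Max e)"
proof -
  have m: "Min e \<in> e" "Max e \<in> e" using assms by auto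
  show "Min (f`e) = f (Min e)"
  proof (rule Min_eqI)
    fix y assume "y \<in> f ` e"
    then obtain x where x: "x \<in> e" "y = f x" by auto
    have "Min e \<le> x" using x assms by simp
    then show "f (Min e) \<le> y" using strict_mono_on_less_eq[OF assms(1)] x m assms(2) by blast
  qed (use assms m in auto)
  show "Max (f`e) = f (Max e)"
  proof (rule Max_eqI)
    fix y assume "y \<in> f ` e"
    then obtain x where x: "x \<in> e" "y = f x" by auto
    have "x \<le> Max e" using x assms by simp
    then show "y \<le> f (Max e)" using strict_mono_on_less_eq[OF assms(1)] x m assms(2) by blast
  qed (use assms m in auto)
qed

lemma sm_crs: assumes "strict_mono_on P f" "e \<subseteq> P" "g \<subseteq> P" "card e = 2" "card g = 2"
  shows "crs (f`e) (f`g) \<longleftrightarrow> crs e g" "nst (f`e) (f`g) \<longleftrightarrow> nst e g"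
proof -
  have fe: "finite e" "e \<noteq> {}" "finite g" "g \<noteq> {}" using assms(4,5) by (auto intro: card_ge_0_finite)
  have mm: "Min e \<in> P" "Max e \<in> P" "Min g \<in> P" "Max g \<in> P" using fe assms(2,3) by (meson Min_in Max_in subsetD)+
  show "crs (f`e) (f`g) \<longleftrightarrow> crs e g" "nst (f`e) (f`g) \<longleftrightarrow> nst e g"
    unfolding crs_def nst_def sm_Min[OF assms(1,2) fe(1,2)] sm_Min[OF assms(1,3) fe(3,4)]
    using strict_mono_on_less[OF assms(1)] mm by auto
qed

lemma SS_image:
  assumes sm: "strict_mono_on P f" and x: "(M,X) \<in> SS P T"
  shows "((`) f ` M, (`) f ` X) \<in> SS (f`P) (f`T)"
proof -
  have inj: "inj_on f P" using sm by (rule strict_mono_on_imp_inj_on)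
  have pm: "pmo P M" and tm: "\<forall>e\<in>M. e \<inter> T \<noteq> {}" and xm: "X \<subseteq> {e\<in>M. e \<subseteq> T \<and> \<not>(\<exists>g\<in>M. nst e g)}"
    using x by (auto simp: SS_def)
  have ar: "\<And>e. e \<in> M \<Longrightarrow> e \<subseteq> P \<and> card e = 2" using pm by (auto simp: pmo_def)
  have "pmo (f`P) ((`) f ` M)"
    unfolding pmo_def
  proof (intro conjI ballI)
    fix e' assume "e' \<in> (`) f ` M"
    then obtain e where e: "e \<in> M" "e' = f ` e" by auto
    show "e' \<subseteq> f ` P" using ar[OF e(1)] e by auto
  next
    fix e' assume "e' \<in> (`) f ` M"
    then obtain e where e: "e \<in> M" "e' = f ` e" by auto
    show "card e' = 2" using ar[OF e(1)] e inj
      by (auto simp: card_image inj_on_subset)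
  next
    fix q assume "q \<in> f ` P"
    then obtain p where p: "p \<in> P" "q = f p" by auto
    then obtain e where e: "e \<in> M" "p \<in> e" using pm unfolding pmo_def by blast
    show "\<exists>!e'. e' \<in> (`) f ` M \<and> q \<in> e'"
    proof (rule ex1I[of _ "f ` e"])
      show "f ` e \<in> (`) f ` M \<and> q \<in> f ` e" using e p by auto
    next
      fix e' assume "e' \<in> (`) f ` M \<and> q \<in> e'"
      then obtain g x where g: "g \<in> M" "e' = f ` g" "x \<in> g" "f x = f p" using p by auto
      have "x = p" using inj g ar[OF g(1)] p(1) by (auto dest: inj_onD)
      then have "g = e" using pmo_unique[OF pm g(1) e(1)] g e by auto
      then show "e' = f ` e" using g by simp
    qed
  next
    fix e' g' assume "e' \<in> (`) f ` M" "g' \<in> (`) f ` M"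
    then obtain e g where "e \<in> M" "g \<in> M" "e' = f ` e" "g' = f ` g" by auto
    then show "\<not> crs e' g'" using sm_crs[OF sm] ar pm unfolding pmo_def by metis
  qed
  moreover have "\<forall>e'\<in>(`) f ` M. e' \<inter> f ` T \<noteq> {}" using tm by blast
  moreover have "(`) f ` X \<subseteq> {e\<in>(`) f ` M. e \<subseteq> f`T \<and> \<not>(\<exists>g\<in>(`) f ` M. nst e g)}"
  proof
    fix e' assume "e' \<in> (`) f ` X"
    then obtain e where e: "e \<in> X" "e' = f ` e" by auto
    have "\<not>(\<exists>g\<in>(`) f ` M. nst e' g)"
    proof
      assume "\<exists>g\<in>(`) f ` M. nst e' g"
      then obtain g where "g \<in> M" "nst (f`e) (f`g)" using e by auto
      then show False using sm_crs(2)[OF sm, of e g] ar e xm by auto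
    qed
    then show "e' \<in> {e\<in>(`) f ` M. e \<subseteq> f`T \<and> \<not>(\<exists>g\<in>(`) f ` M. nst e g)}"
      using e xm by auto
  qed
  ultimately show ?thesis by (simp add: SS_def)
qed

lemma SS_card_sm:
  assumes fin: "finite P" and sm: "strict_mono_on P f" and TP: "T \<subseteq> P"
  shows "card (SS (f`P) (f`T)) = card (SS P T)"
proof -
  define g where "g = the_inv_into P f"
  have inj: "inj_on f P" using sm by (rule strict_mono_on_imp_inj_on)
  have gf: "\<And>x. x \<in> P \<Longrightarrow> g (f x) = x" using inj by (simp add: g_def the_inv_into_f_f)
  have fg: "\<And>y. y \<in> f ` P \<Longrightarrow> f (g y) = y" using inj by (simp add: g_def f_the_inv_into_f)
  have smg: "strict_mono_on (f`P) g"
  proof (rule strict_mono_onI)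
    fix r s assume "r \<in> f`P" "s \<in> f`P" "r < s"
    then obtain x y where "x \<in> P" "y \<in> P" "r = f x" "s = f y" by auto
    then show "g r < g s" using \<open>r < s\<close> gf strict_mono_on_less[OF sm] by auto
  qed
  have gP: "g ` f ` P = P" using gf by (simp add: image_image cong: image_cong)
  have gT: "g ` f ` T = T" using gf TP by (simp add: image_image subset_iff cong: image_cong)
  have "bij_betw (\<lambda>(M,X). ((`) f ` M, (`) f ` X)) (SS P T) (SS (f`P) (f`T))"
  proof (rule bij_betw_byWitness[where f'="\<lambda>(M,X). ((`) g ` M, (`) g ` X)"])
    show "\<forall>a\<in>SS P T. (\<lambda>(M,X). ((`) g ` M, (`) g ` X)) ((\<lambda>(M,X). ((`) f ` M, (`) f ` X)) a) = a"
    proof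
      fix a assume a: "a \<in> SS P T"
      obtain M X where [simp]: "a = (M,X)" by fastforce
      have h: "g ` f ` e = e" if "e \<in> M" for e
      proof -
        have "e \<subseteq> P" using a that by (auto simp: SS_def pmo_def)
        then show ?thesis using gf by (simp add: image_image subset_iff cong: image_cong)
      qed
      have "X \<subseteq> M" using a by (auto simp: SS_def)
      then have h2: "g ` f ` e = e" if "e \<in> X" for e using h that by blast
      have "(`) g ` (`) f ` M = M" "(`) g ` (`) f ` X = X"
        using h h2 by (simp_all add: image_image cong: image_cong)
      then show "(\<lambda>(M,X). ((`) g ` M, (`) g ` X)) ((\<lambda>(M,X). ((`) f ` M, (`) f ` X)) a) = a"
        by simp
    qed
    show "\<forall>a\<in>SS (f`P) (f`T). (\<lambda>(M,X). ((`) f ` M, (`) f ` X)) ((\<lambda>(M,X). ((`) g ` M, (`) g ` X)) a) = a"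
    proof
      fix a assume a: "a \<in> SS (f`P) (f`T)"
      obtain M X where [simp]: "a = (M,X)" by fastforce
      have h: "f ` g ` e = e" if "e \<in> M" for e
      proof -
        have "e \<subseteq> (f`P)" using a that by (auto simp: SS_def pmo_def)
        then show ?thesis using fg by (simp add: image_image subset_iff cong: image_cong)
      qed
      have "X \<subseteq> M" using a by (auto simp: SS_def)
      then have h2: "f ` g ` e = e" if "e \<in> X" for e using h that by blast
      have "(`) f ` (`) g ` M = M" "(`) f ` (`) g ` X = X"
        using h h2 by (simp_all add: image_image cong: image_cong)
      then show "(\<lambda>(M,X). ((`) f ` M, (`) f ` X)) ((\<lambda>(M,X). ((`) g ` M, (`) g ` X)) a) = a"
        by simp
    qed
    show "(\<lambda>(M,X). ((`) f ` M, (`) f ` X)) ` SS P T \<subseteq> SS (f`P) (f`T)"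
      using SS_image[OF sm] by auto
    show "(\<lambda>(M,X). ((`) g ` M, (`) g ` X)) ` SS (f`P) (f`T) \<subseteq> SS P T"
      using SS_image[OF smg, of _ _ "f`T"] gP gT by fastforce
  qed
  then show ?thesis by (simp add: bij_betw_same_card)
qed


lemma SS_monoT: "T \<subseteq> T' \<Longrightarrow> (M,X) \<in> SS P T \<Longrightarrow> (M,X) \<in> SS P T'"
  unfolding SS_def by blast

lemma SS_monoX: "Y \<subseteq> X \<Longrightarrow> (M,X) \<in> SS P T \<Longrightarrow> (M,Y) \<in> SS P T"
  unfolding SS_def by blast

lemma pmo_arc: assumes "pmo P M" "p \<in> P"
  obtains a b where "{a,b} \<in> M" "a < b" "p \<in> {a,b}"
proof -
  obtain e where e: "e \<in> M" "p \<in> e" using assms unfolding pmo_def by blast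
  then have "card e = 2" using assms unfolding pmo_def by blast
  then obtain a b where "a < b" "e = {a,b}" using two_elem by blast
  then show ?thesis using that e by blast
qed

lemma pmo_pair: assumes "pmo P M" "e \<in> M" obtains a b where "e = {a,b}" "a < b" "a \<in> P" "b \<in> P"
proof -
  have "card e = 2" "e \<subseteq> P" using assms unfolding pmo_def by blast+
  then obtain a b where "a < b" "e = {a,b}" using two_elem by blast
  then show ?thesis using that \<open>e \<subseteq> P\<close> by blast
qed

lemma pmo_ncrs: "pmo P M \<Longrightarrow> e \<in> M \<Longrightarrow> f \<in> M \<Longrightarrow> \<not> crs e f"
  unfolding pmo_def by blast

lemma B_fwd:
  assumes m: "1 \<le> m" and n: "1 \<le> n" and x: "(M,X) \<in> SS {..<n+m} {..<n}" and c0: "{n-1,n} \<notin> M"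
  shows "(M,X) \<in> SS {..<n+m} {..<n-1}"
proof -
  have pm: "pmo {..<n+m} M" and tm: "\<forall>e\<in>M. e \<inter> {..<n} \<noteq> {}"
    and xm: "X \<subseteq> {e\<in>M. e \<subseteq> {..<n} \<and> \<not>(\<exists>g\<in>M. nst e g)}"
    using x by (auto simp: SS_def)
  obtain j y where eb: "{j,y} \<in> M" "j < y" "n \<in> {j,y}" using pmo_arc[OF pm, of n] m by auto
  have "{j,y} \<inter> {..<n} \<noteq> {}" using tm eb by blast
  then have jy: "y = n" "j < n" using eb by auto
  have "j \<noteq> n - 1" using c0 eb jy by auto
  then have j: "j < n - 1" using jy by auto
  have tm': "\<forall>e\<in>M. e \<inter> {..<n-1} \<noteq> {}"
  proof
    fix e assume e: "e \<in> M"
    then obtain a b where ab: "e = {a,b}" "a < b" "b < n + m" using pmo_pair[OF pm] by (metis lessThan_iff)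
    show "e \<inter> {..<n-1} \<noteq> {}"
    proof
      assume emp: "e \<inter> {..<n-1} = {}"
      have "e \<inter> {..<n} \<noteq> {}" using tm e by blast
      then have a: "a = n - 1" using emp ab by auto
      have "b \<noteq> n" using c0 e ab a by auto
      then have "n < b" using a ab n by auto
      then have "crs {j,y} e" using ab a j jy crs_pair by auto
      then show False using pmo_ncrs[OF pm eb(1) e] by simp
    qed
  qed
  have xm': "X \<subseteq> {e\<in>M. e \<subseteq> {..<n-1} \<and> \<not>(\<exists>g\<in>M. nst e g)}"
  proof
    fix e assume eX: "e \<in> X"
    then have e: "e \<in> M" "e \<subseteq> {..<n}" "\<not>(\<exists>g\<in>M. nst e g)" using xm by auto
    then obtain a b where ab: "e = {a,b}" "a < b" using pmo_pair[OF pm] by metis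
    have "b < n" using e ab by auto
    have "b \<noteq> n - 1"
    proof
      assume b: "b = n - 1"
      consider "j = a" | "j < a" | "a < j" by linarith
      then show False
      proof cases
        case 1
        then have "{j,y} = e" using pmo_unique[OF pm eb(1) e(1), of a] ab by auto
        then show False using jy ab b n by auto
      next
        case 2
        then have "nst e {j,y}" using nst_pair ab b jy n by auto
        then show False using e eb by blast
      next
        case 3
        then have "crs e {j,y}" using crs_pair ab b jy j n by auto
        then show False using pmo_ncrs[OF pm e(1) eb(1)] by simp
      qed
    qed
    then have "e \<subseteq> {..<n-1}" using ab \<open>b < n\<close> by auto
    then show "e \<in> {e\<in>M. e \<subseteq> {..<n-1} \<and> \<not>(\<exists>g\<in>M. nst e g)}" using e by auto
  qed
  show ?thesis using pm tm' xm' by (auto simp: SS_def)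
qed

lemma B_eq:
  assumes m: "1 \<le> m" and n: "1 \<le> n"
  shows "{x \<in> SS {..<n+m} {..<n}. {n-1,n} \<notin> fst x} = SS {..<n+m} {..<n-1}"
proof
  show "{x \<in> SS {..<n+m} {..<n}. {n-1,n} \<notin> fst x} \<subseteq> SS {..<n+m} {..<n-1}"
    using B_fwd[OF m n] by auto
  show "SS {..<n+m} {..<n-1} \<subseteq> {x \<in> SS {..<n+m} {..<n}. {n-1,n} \<notin> fst x}"
  proof
    fix x assume x: "x \<in> SS {..<n+m} {..<n-1}"
    obtain M X where [simp]: "x = (M,X)" by fastforce
    have "(M,X) \<in> SS {..<n+m} {..<n}" using SS_monoT[of "{..<n-1}" "{..<n}"] x by auto
    moreover have "{n-1,n} \<notin> M" using x by (auto simp: SS_def)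
    ultimately show "x \<in> {x \<in> SS {..<n+m} {..<n}. {n-1,n} \<notin> fst x}" by simp
  qed
qed



lemma pmo_cover: "pmo P M \<Longrightarrow> p \<in> P \<Longrightarrow> \<exists>e\<in>M. p \<in> e"
  unfolding pmo_def by (meson ex1E)

lemma pmo_sub: "pmo P M \<Longrightarrow> e \<in> M \<Longrightarrow> e \<subseteq> P"
  by (simp add: pmo_def)

lemma A_fwd:
  assumes m: "1 \<le> m" and n: "1 \<le> n" and x: "(M,X) \<in> SS {..<n+m} {..<n}" and c0: "{n-1,n} \<in> M"
  shows "(M - {{n-1,n}}, X) \<in> SS ({..<n+m} - {n-1,n}) {..<n-1}"
proof -
  have pm: "pmo {..<n+m} M" and tm: "\<forall>e\<in>M. e \<inter> {..<n} \<noteq> {}"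
    and xm: "X \<subseteq> {e\<in>M. e \<subseteq> {..<n} \<and> \<not>(\<exists>g\<in>M. nst e g)}"
    using x by (auto simp: SS_def)
  have av: "n - 1 \<notin> e \<and> n \<notin> e" if "e \<in> M" "e \<noteq> {n-1,n}" for e
  proof -
    have "n - 1 \<notin> e" using pmo_unique[OF pm that(1) c0, of "n-1"] that(2) by blast
    moreover have "n \<notin> e" using pmo_unique[OF pm that(1) c0, of "n"] that(2) by blast
    ultimately show ?thesis by blast
  qed
  have "pmo ({..<n+m} - {n-1,n}) (M - {{n-1,n}})"
    unfolding pmo_def
  proof (intro conjI ballI)
    fix e assume "e \<in> M - {{n-1,n}}"
    then have "e \<in> M" "e \<noteq> {n-1,n}" by auto
    then show "e \<subseteq> {..<n+m} - {n-1,n}" using av[of e] pm unfolding pmo_def by blast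
  next
    fix e assume "e \<in> M - {{n-1,n}}"
    then show "card e = 2" using pm unfolding pmo_def by blast
  next
    fix p assume p: "p \<in> {..<n+m} - {n-1,n}"
    then have "p \<in> {..<n+m}" by blast
    then obtain e where e: "e \<in> M" "p \<in> e" using pmo_cover[OF pm] by blast
    then have "e \<noteq> {n-1,n}" using p by auto
    show "\<exists>!e. e \<in> M - {{n-1,n}} \<and> p \<in> e"
    proof (rule ex1I[of _ e])
      show "e \<in> M - {{n-1,n}} \<and> p \<in> e" using e \<open>e \<noteq> {n-1,n}\<close> by simp
      fix e' assume "e' \<in> M - {{n-1,n}} \<and> p \<in> e'"
      then show "e' = e" using pmo_unique[OF pm _ e(1), of e' p] e(2) by simp
    qed
  next
    fix e f assume "e \<in> M - {{n-1,n}}" "f \<in> M - {{n-1,n}}"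
    then show "\<not> crs e f" using pm unfolding pmo_def by blast
  qed
  moreover have "\<forall>e\<in>M - {{n-1,n}}. e \<inter> {..<n-1} \<noteq> {}"
  proof
    fix e assume e: "e \<in> M - {{n-1,n}}"
    then obtain p where "p \<in> e" "p < n" using tm by auto
    moreover have "p \<noteq> n - 1" using av e \<open>p \<in> e\<close> by auto
    ultimately show "e \<inter> {..<n-1} \<noteq> {}" by auto
  qed
  moreover have "X \<subseteq> {e\<in>M - {{n-1,n}}. e \<subseteq> {..<n-1} \<and> \<not>(\<exists>g\<in>M - {{n-1,n}}. nst e g)}"
  proof
    fix e assume "e \<in> X"
    then have e: "e \<in> M" "e \<subseteq> {..<n}" "\<not>(\<exists>g\<in>M. nst e g)" using xm by auto
    then have "e \<noteq> {n-1,n}" by auto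
    have "e \<subseteq> {..<n-1}"
    proof
      fix p assume "p \<in> e"
      then have "p < n" "p \<noteq> n - 1" using av[OF e(1) \<open>e \<noteq> {n-1,n}\<close>] e(2) by auto
      then show "p \<in> {..<n-1}" by simp
    qed
    then show "e \<in> {e\<in>M - {{n-1,n}}. e \<subseteq> {..<n-1} \<and> \<not>(\<exists>g\<in>M - {{n-1,n}}. nst e g)}"
      using e \<open>e \<noteq> {n-1,n}\<close> by auto
  qed
  ultimately show ?thesis unfolding SS_def by blast
qed


lemma A_bwd:
  assumes m: "1 \<le> m" and n: "1 \<le> n" and x: "(M,X) \<in> SS ({..<n+m} - {n-1,n}) {..<n-1}"
  shows "(insert {n-1,n} M, X) \<in> SS {..<n+m} {..<n}"
proof -
  define c0 where "c0 = {n-1,n}"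
  have pm: "pmo ({..<n+m} - c0) M" and tm: "\<forall>e\<in>M. e \<inter> {..<n-1} \<noteq> {}"
    and xm: "X \<subseteq> {e\<in>M. e \<subseteq> {..<n-1} \<and> \<not>(\<exists>g\<in>M. nst e g)}"
    using x by (auto simp: SS_def c0_def)
  have ar: "\<And>e. e \<in> M \<Longrightarrow> e \<subseteq> {..<n+m} - c0 \<and> card e = 2" using pm unfolding pmo_def by blast
  have c0M: "c0 \<notin> M" using ar unfolding c0_def by blast
  have c0c: "card c0 = 2" using n by (simp add: c0_def)
  have c0s: "c0 \<subseteq> {..<n+m}" using n m by (auto simp: c0_def)
  have nc: "\<not> crs c0 e \<and> \<not> crs e c0" if e: "e \<in> M" for e
  proof -
    obtain a b where ab: "e = {a,b}" "a < b" "a \<in> {..<n+m} - c0" "b \<in> {..<n+m} - c0"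
      using pmo_pair[OF pm e] by metis
    have c0p: "c0 = {n-1, n}" "n - 1 < n" using n by (auto simp: c0_def)
    show ?thesis unfolding c0p(1) ab(1) crs_pair[OF c0p(2) ab(2)] crs_pair[OF ab(2) c0p(2)]
      using ab(3,4) c0p by auto
  qed
  have "pmo {..<n+m} (insert c0 M)"
    unfolding pmo_def
  proof (intro conjI ballI)
    fix e assume "e \<in> insert c0 M"
    then show "e \<subseteq> {..<n+m}" using ar c0s by blast
  next
    fix e assume "e \<in> insert c0 M"
    then show "card e = 2" using ar c0c by blast
  next
    fix p assume p: "p \<in> {..<n+m}"
    show "\<exists>!e. e \<in> insert c0 M \<and> p \<in> e"
    proof (cases "p \<in> c0")
      case True
      show ?thesis
      proof (rule ex1I[of _ c0])
        show "c0 \<in> insert c0 M \<and> p \<in> c0" using True by simp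
        fix e assume "e \<in> insert c0 M \<and> p \<in> e"
        then show "e = c0" using ar True by blast
      qed
    next
      case False
      then have "p \<in> {..<n+m} - c0" using p by blast
      then obtain e where e: "e \<in> M" "p \<in> e" using pmo_cover[OF pm] by blast
      show ?thesis
      proof (rule ex1I[of _ e])
        show "e \<in> insert c0 M \<and> p \<in> e" using e by simp
        fix e' assume e': "e' \<in> insert c0 M \<and> p \<in> e'"
        then have "e' \<in> M" using False by auto
        then show "e' = e" using pmo_unique[OF pm _ e(1), of e' p] e' e(2) by simp
      qed
    qed
  next
    fix e f assume "e \<in> insert c0 M" "f \<in> insert c0 M"
    then show "\<not> crs e f"
    proof (elim insertE)
      assume "e = c0" "f = c0" then show ?thesis by (simp add: crs_def)
    qed (use nc pmo_ncrs[OF pm] in blast)+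
  qed
  moreover have "\<forall>e\<in>insert c0 M. e \<inter> {..<n} \<noteq> {}"
  proof
    fix e assume e: "e \<in> insert c0 M"
    show "e \<inter> {..<n} \<noteq> {}"
    proof (cases "e = c0")
      case True then show ?thesis using n by (auto simp: c0_def)
    next
      case False
      then obtain p where "p \<in> e" "p < n - 1" using tm e by blast
      then show ?thesis by auto
    qed
  qed
  moreover have "X \<subseteq> {e\<in>insert c0 M. e \<subseteq> {..<n} \<and> \<not>(\<exists>g\<in>insert c0 M. nst e g)}"
  proof
    fix e assume "e \<in> X"
    then have e: "e \<in> M" "e \<subseteq> {..<n-1}" "\<not>(\<exists>g\<in>M. nst e g)" using xm by auto
    obtain a b where ab: "e = {a,b}" "a < b" using pmo_pair[OF pm e(1)] by metis
    have "\<not> nst e c0"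
    proof
      assume "nst e c0"
      then have "n - 1 < a" "b < n" using nst_pair[OF ab(2), of "n-1" n] n ab by (auto simp: c0_def)
      then show False using ab by simp
    qed
    then show "e \<in> {e\<in>insert c0 M. e \<subseteq> {..<n} \<and> \<not>(\<exists>g\<in>insert c0 M. nst e g)}"
      using e by auto
  qed
  ultimately show ?thesis unfolding SS_def c0_def by blast
qed

lemma A_card:
  assumes m: "1 \<le> m" and n: "1 \<le> n"
  shows "card {x \<in> SS {..<n+m} {..<n}. {n-1,n} \<in> fst x} = card (SS ({..<n+m} - {n-1,n}) {..<n-1})"
proof -
  have "bij_betw (\<lambda>(M,X). (M - {{n-1,n}}, X)) {x \<in> SS {..<n+m} {..<n}. {n-1,n} \<in> fst x}
      (SS ({..<n+m} - {n-1,n}) {..<n-1})"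
  proof (rule bij_betw_byWitness[where f'="\<lambda>(M,X). (insert {n-1,n} M, X)"])
    show "\<forall>a\<in>{x \<in> SS {..<n+m} {..<n}. {n-1,n} \<in> fst x}.
       (\<lambda>(M,X). (insert {n-1,n} M, X)) ((\<lambda>(M,X). (M - {{n-1,n}}, X)) a) = a"
      by (auto simp: insert_absorb)
    show "\<forall>a\<in>SS ({..<n+m} - {n-1,n}) {..<n-1}.
       (\<lambda>(M,X). (M - {{n-1,n}}, X)) ((\<lambda>(M,X). (insert {n-1,n} M, X)) a) = a"
    proof
      fix a assume a: "a \<in> SS ({..<n+m} - {n-1,n}) {..<n-1}"
      obtain M X where [simp]: "a = (M,X)" by fastforce
      have "pmo ({..<n+m} - {n-1,n}) M" using a by (simp add: SS_def)
      then have "{n-1,n} \<notin> M" using pmo_sub by blast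
      then show "(\<lambda>(M,X). (M - {{n-1,n}}, X)) ((\<lambda>(M,X). (insert {n-1,n} M, X)) a) = a" by simp
    qed
    show "(\<lambda>(M,X). (M - {{n-1,n}}, X)) ` {x \<in> SS {..<n+m} {..<n}. {n-1,n} \<in> fst x}
       \<subseteq> SS ({..<n+m} - {n-1,n}) {..<n-1}"
      using A_fwd[OF m n] by auto
    show "(\<lambda>(M,X). (insert {n-1,n} M, X)) ` SS ({..<n+m} - {n-1,n}) {..<n-1}
       \<subseteq> {x \<in> SS {..<n+m} {..<n}. {n-1,n} \<in> fst x}"
      using A_bwd[OF m n] by auto
  qed
  then show ?thesis by (rule bij_betw_same_card)
qed

lemma shift_card:
  assumes m: "1 \<le> m" and n: "1 \<le> n"
  shows "card (SS ({..<n+m} - {n-1,n}) {..<n-1}) = W (m-1) (n-1)"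
proof -
  define h where "h p = (if p < n - 1 then p else p - 2)" for p :: nat
  define P where "P = {..<n+m} - {n-1,n}"
  have sm: "strict_mono_on P h"
    by (rule strict_mono_onI) (use n in \<open>auto simp: h_def P_def\<close>)
  have hP: "h ` P = {..<(n-1)+(m-1)}"
  proof
    show "h ` P \<subseteq> {..<(n-1)+(m-1)}" using m n by (auto simp: h_def P_def)
    show "{..<(n-1)+(m-1)} \<subseteq> h ` P"
    proof
      fix y assume y: "y \<in> {..<(n-1)+(m-1)}"
      show "y \<in> h ` P"
      proof (cases "y < n - 1")
        case True
        then have "h y = y" "y \<in> P" using y by (auto simp: h_def P_def)
        then show ?thesis by (metis image_eqI)
      next
        case False
        then have "h (y+2) = y" "y + 2 \<in> P" using y m n by (auto simp: h_def P_def)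
        then show ?thesis by (metis image_eqI)
      qed
    qed
  qed
  have hT: "h ` {..<n-1} = {..<n-1}" by (auto simp: h_def image_iff)
  have "card (SS (h`P) (h`{..<n-1})) = card (SS P {..<n-1})"
    by (rule SS_card_sm[OF _ sm]) (auto simp: P_def)
  then have "card (SS {..<(n-1)+(m-1)} {..<n-1}) = card (SS P {..<n-1})" using hP hT by simp
  then show ?thesis by (simp add: W_def P_def)
qed

lemma R1:
  assumes m: "1 \<le> m" and n: "1 \<le> n"
  shows "W m n = W (m-1) (n-1) + W (m+1) (n-1)"
proof -
  let ?S = "SS {..<n+m} {..<n}"
  have fin: "finite ?S" by (rule SS_finite) simp
  have "?S = {x \<in> ?S. {n-1,n} \<in> fst x} \<union> {x \<in> ?S. {n-1,n} \<notin> fst x}" by blast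
  then have "card ?S = card {x \<in> ?S. {n-1,n} \<in> fst x} + card {x \<in> ?S. {n-1,n} \<notin> fst x}"
    using fin by (metis (no_types, lifting) card_Un_disjoint disjoint_iff finite_Un mem_Collect_eq)
  also have "\<dots> = W (m-1) (n-1) + card (SS {..<n+m} {..<n-1})"
    using A_card[OF m n] shift_card[OF m n] B_eq[OF m n] by simp
  also have "card (SS {..<n+m} {..<n-1}) = W (m+1) (n-1)"
    unfolding W_def using n by (simp add: algebra_simps)
  finally show ?thesis unfolding W_def by simp
qed


lemma pmo_ex1: "pmo P M \<Longrightarrow> p \<in> P \<Longrightarrow> \<exists>!e. e \<in> M \<and> p \<in> e"
  by (simp add: pmo_def)

definition cM :: "nat \<Rightarrow> nat set set \<Rightarrow> nat set" where
  "cM n M = (THE e. e \<in> M \<and> n - 1 \<in> e)"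

lemma cM_prop:
  assumes "pmo {..<n} M" "1 \<le> n"
  shows "cM n M \<in> M" "n - 1 \<in> cM n M" "\<And>e. e \<in> M \<Longrightarrow> n - 1 \<in> e \<Longrightarrow> cM n M = e"
proof -
  have ex: "\<exists>!e. e \<in> M \<and> n - 1 \<in> e" using pmo_ex1[OF assms(1), of "n-1"] assms(2) by simp
  show "cM n M \<in> M" "n - 1 \<in> cM n M" using theI'[OF ex] by (simp_all add: cM_def)
  show "\<And>e. e \<in> M \<Longrightarrow> n - 1 \<in> e \<Longrightarrow> cM n M = e" unfolding cM_def using the1_equality[OF ex] by blast
qed

lemma tm_last: assumes "pmo {..<n} M" shows "\<forall>e\<in>M. e \<inter> {..<n-1} \<noteq> {}"
proof
  fix e assume "e \<in> M"
  then obtain a b where "e = {a,b}" "a < b" "b \<in> {..<n}" using pmo_pair[OF assms] by metis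
  then show "e \<inter> {..<n-1} \<noteq> {}" by auto
qed

lemma S0_fwd:
  assumes x: "(M,X) \<in> SS {..<n} {..<n}" and nx: "\<forall>e\<in>X. n - 1 \<notin> e"
  shows "(M,X) \<in> SS {..<n} {..<n-1}"
proof -
  have pm: "pmo {..<n} M" and xm: "X \<subseteq> {e\<in>M. e \<subseteq> {..<n} \<and> \<not>(\<exists>g\<in>M. nst e g)}"
    using x by (auto simp: SS_def)
  have "X \<subseteq> {e\<in>M. e \<subseteq> {..<n-1} \<and> \<not>(\<exists>g\<in>M. nst e g)}"
  proof
    fix e assume e: "e \<in> X"
    have "e \<subseteq> {..<n-1}"
    proof
      fix p assume "p \<in> e"
      then have "p < n" "p \<noteq> n - 1" using e xm nx by auto
      then show "p \<in> {..<n-1}" by simp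
    qed
    then show "e \<in> {e\<in>M. e \<subseteq> {..<n-1} \<and> \<not>(\<exists>g\<in>M. nst e g)}" using e xm by auto
  qed
  then show ?thesis using pm tm_last[OF pm] by (simp add: SS_def)
qed

lemma tm_mono: "\<forall>e\<in>M. e \<inter> A \<noteq> {} \<Longrightarrow> A \<subseteq> B \<Longrightarrow> \<forall>e\<in>M. e \<inter> B \<noteq> {}"
  by blast

lemma xm_mono: "X \<subseteq> {e\<in>M. e \<subseteq> A \<and> Q e} \<Longrightarrow> A \<subseteq> B \<Longrightarrow> X \<subseteq> {e\<in>M. e \<subseteq> B \<and> Q e}"
  by blast

lemma S0_ins:
  assumes n: "1 \<le> n" and x: "(M,X) \<in> SS {..<n} {..<n-1}"
  shows "(M, insert (cM n M) X) \<in> SS {..<n} {..<n}"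
proof -
  have pm: "pmo {..<n} M" and xm: "X \<subseteq> {e\<in>M. e \<subseteq> {..<n-1} \<and> \<not>(\<exists>g\<in>M. nst e g)}"
    and tm: "\<forall>e\<in>M. e \<inter> {..<n-1} \<noteq> {}"
    using x by (auto simp: SS_def)
  obtain a b where ab: "cM n M = {a,b}" "a < b" "b \<in> {..<n}" using pmo_pair[OF pm cM_prop(1)[OF pm n]] by metis
  have b: "b = n - 1" using cM_prop(2)[OF pm n] ab by auto
  have "\<not> nst (cM n M) g" if g: "g \<in> M" for g
  proof
    assume ng: "nst (cM n M) g"
    obtain u v where uv: "g = {u,v}" "u < v" "v \<in> {..<n}" using pmo_pair[OF pm g] by metis
    have "b < v" using ng nst_pair[OF ab(2) uv(2)] ab uv by simp
    then show False using b uv by auto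
  qed
  moreover have "cM n M \<subseteq> {..<n}" using pmo_sub[OF pm cM_prop(1)[OF pm n]] .
  moreover have sub: "{..<n-1} \<subseteq> {..<n}" by simp
  have xm2: "X \<subseteq> {e\<in>M. e \<subseteq> {..<n} \<and> \<not>(\<exists>g\<in>M. nst e g)}" using xm_mono[OF xm sub] .
  ultimately have "insert (cM n M) X \<subseteq> {e\<in>M. e \<subseteq> {..<n} \<and> \<not>(\<exists>g\<in>M. nst e g)}"
    using xm2 cM_prop(1)[OF pm n] by blast
  moreover have "\<forall>e\<in>M. e \<inter> {..<n} \<noteq> {}" using tm_mono[OF tm sub] .
  ultimately show ?thesis using pm by (simp add: SS_def)
qed

lemma R2:
  assumes n: "1 \<le> n"
  shows "W 0 n = 2 * W 1 (n-1)"
proof -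
  let ?S = "SS {..<n} {..<n}" and ?S' = "SS {..<n} {..<n-1}"
  have fin: "finite ?S" by (rule SS_finite) simp
  have split: "card ?S = card {x \<in> ?S. \<exists>e\<in>snd x. n - 1 \<in> e} + card {x \<in> ?S. \<not>(\<exists>e\<in>snd x. n - 1 \<in> e)}"
  proof -
    have "?S = {x \<in> ?S. \<exists>e\<in>snd x. n - 1 \<in> e} \<union> {x \<in> ?S. \<not>(\<exists>e\<in>snd x. n - 1 \<in> e)}" by blast
    then show ?thesis
      using fin by (metis (no_types, lifting) card_Un_disjoint disjoint_iff finite_Un mem_Collect_eq)
  qed
  have B: "{x \<in> ?S. \<not>(\<exists>e\<in>snd x. n - 1 \<in> e)} = ?S'"
  proof
    show "{x \<in> ?S. \<not>(\<exists>e\<in>snd x. n - 1 \<in> e)} \<subseteq> ?S'" using S0_fwd by fastforce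
    show "?S' \<subseteq> {x \<in> ?S. \<not>(\<exists>e\<in>snd x. n - 1 \<in> e)}"
    proof
      fix x assume x: "x \<in> ?S'"
      obtain M X where [simp]: "x = (M,X)" by fastforce
      have "(M,X) \<in> ?S" using SS_monoT[of "{..<n-1}" "{..<n}"] x by auto
      moreover have "\<forall>e\<in>X. n - 1 \<notin> e" using x by (auto simp: SS_def)
      ultimately show "x \<in> {x \<in> ?S. \<not>(\<exists>e\<in>snd x. n - 1 \<in> e)}" by auto
    qed
  qed
  have "bij_betw (\<lambda>(M,X). (M, insert (cM n M) X)) ?S' {x \<in> ?S. \<exists>e\<in>snd x. n - 1 \<in> e}"
  proof (rule bij_betw_byWitness[where f'="\<lambda>(M,X). (M, {e\<in>X. n - 1 \<notin> e})"])
    show "\<forall>a\<in>?S'. (\<lambda>(M,X). (M, {e\<in>X. n - 1 \<notin> e})) ((\<lambda>(M,X). (M, insert (cM n M) X)) a) = a"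
    proof
      fix a assume a: "a \<in> ?S'"
      obtain M X where [simp]: "a = (M,X)" by fastforce
      have pm: "pmo {..<n} M" using a by (simp add: SS_def)
      have "\<forall>e\<in>X. n - 1 \<notin> e" using a by (auto simp: SS_def)
      then have "{e\<in>insert (cM n M) X. n - 1 \<notin> e} = X" using cM_prop(2)[OF pm n] by auto
      then show "(\<lambda>(M,X). (M, {e\<in>X. n - 1 \<notin> e})) ((\<lambda>(M,X). (M, insert (cM n M) X)) a) = a" by simp
    qed
    show "\<forall>a\<in>{x \<in> ?S. \<exists>e\<in>snd x. n - 1 \<in> e}.
        (\<lambda>(M,X). (M, insert (cM n M) X)) ((\<lambda>(M,X). (M, {e\<in>X. n - 1 \<notin> e})) a) = a"
    proof
      fix a assume a: "a \<in> {x \<in> ?S. \<exists>e\<in>snd x. n - 1 \<in> e}"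
      obtain M X where [simp]: "a = (M,X)" by fastforce
      have pm: "pmo {..<n} M" using a by (simp add: SS_def)
      have XM: "X \<subseteq> M" using a by (auto simp: SS_def)
      obtain e0 where e0: "e0 \<in> X" "n - 1 \<in> e0" using a by auto
      have c: "cM n M = e0" using cM_prop(3)[OF pm n] e0 XM by blast
      have "insert (cM n M) {e\<in>X. n - 1 \<notin> e} = X"
      proof
        show "insert (cM n M) {e\<in>X. n - 1 \<notin> e} \<subseteq> X" using c e0 by auto
        show "X \<subseteq> insert (cM n M) {e\<in>X. n - 1 \<notin> e}"
        proof
          fix e assume e: "e \<in> X"
          show "e \<in> insert (cM n M) {e\<in>X. n - 1 \<notin> e}"
          proof (cases "n - 1 \<in> e")
            case True
            have "e \<in> M" using e XM by blast
            then have "cM n M = e" using cM_prop(3)[OF pm n _ True] by blast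
            then show ?thesis by simp
          qed (use e in simp)
        qed
      qed
      then show "(\<lambda>(M,X). (M, insert (cM n M) X)) ((\<lambda>(M,X). (M, {e\<in>X. n - 1 \<notin> e})) a) = a" by simp
    qed
    show "(\<lambda>(M,X). (M, insert (cM n M) X)) ` ?S' \<subseteq> {x \<in> ?S. \<exists>e\<in>snd x. n - 1 \<in> e}"
    proof
      fix y assume "y \<in> (\<lambda>(M,X). (M, insert (cM n M) X)) ` ?S'"
      then obtain M X where x: "(M,X) \<in> ?S'" and y: "y = (M, insert (cM n M) X)" by auto
      have pm: "pmo {..<n} M" using x by (simp add: SS_def)
      show "y \<in> {x \<in> ?S. \<exists>e\<in>snd x. n - 1 \<in> e}" using S0_ins[OF n x] cM_prop(2)[OF pm n] y by auto
    qed
    show "(\<lambda>(M,X). (M, {e\<in>X. n - 1 \<notin> e})) ` {x \<in> ?S. \<exists>e\<in>snd x. n - 1 \<in> e} \<subseteq> ?S'"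
    proof
      fix y assume "y \<in> (\<lambda>(M,X). (M, {e\<in>X. n - 1 \<notin> e})) ` {x \<in> ?S. \<exists>e\<in>snd x. n - 1 \<in> e}"
      then obtain M X where x: "(M,X) \<in> ?S" and y: "y = (M, {e\<in>X. n - 1 \<notin> e})" by auto
      have "{e\<in>X. n - 1 \<notin> e} \<subseteq> X" by blast
      from SS_monoX[OF this x] have "(M, {e\<in>X. n - 1 \<notin> e}) \<in> ?S" .
      then show "y \<in> ?S'" using S0_fwd y by auto
    qed
  qed
  then have A: "card {x \<in> ?S. \<exists>e\<in>snd x. n - 1 \<in> e} = card ?S'" by (simp add: bij_betw_same_card)
  have "W 1 (n-1) = card ?S'" using n by (simp add: W_def)
  then show ?thesis using split A B by (simp add: W_def)
qed

lemma W00: "W 0 0 = 1"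
proof -
  have "SS {..<0} {..<0} = {({},{})}"
  proof
    show "SS {..<0} {..<0} \<subseteq> {({},{})}"
    proof
      fix x assume x: "x \<in> SS {..<0} {..<0}"
      obtain M X where [simp]: "x = (M,X)" by fastforce
      have "\<forall>e\<in>M. e \<inter> {..<0} \<noteq> {}" using x by (simp add: SS_def)
      then have "M = {}" by auto
      moreover have "X \<subseteq> M" using x by (auto simp: SS_def)
      ultimately show "x \<in> {({},{})}" by simp
    qed
    show "{({},{})} \<subseteq> SS {..<0} {..<0}" by (simp add: SS_def pmo_def)
  qed
  then show ?thesis by (simp add: W_def)
qed

lemma Wm0: assumes "1 \<le> m" shows "W m 0 = 0"
proof -
  have "SS {..<m} {..<0} = {}"
  proof (rule ccontr)
    assume "SS {..<m} {..<0} \<noteq> {}"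
    then obtain M X where x: "(M,X) \<in> SS {..<m} {..<0}" by auto
    have tm: "\<forall>e\<in>M. e \<inter> {..<0} \<noteq> {}" using x by (simp add: SS_def)
    have pm: "pmo {..<m} M" using x unfolding SS_def by blast
    obtain e where "e \<in> M" using pmo_cover[OF pm, of 0] assms by auto
    then show False using tm by auto
  qed
  then show ?thesis by (simp add: W_def)
qed

lemma W_zero: "n < m \<Longrightarrow> W m n = 0"
proof (induction n arbitrary: m)
  case 0 then show ?case using Wm0 by simp
next
  case (Suc n)
  then have "W m (Suc n) = W (m-1) n + W (m+1) n" using R1[of m "Suc n"] by simp
  then show ?case using Suc by simp
qed

lemma W_binom: "W m (m + 2*k) = (m + 2*k) choose k"
proof -
  have "\<forall>m k. m + 2*k = N \<longrightarrow> W m N = N choose k" for N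
  proof (induction N)
    case 0 then show ?case using W00 by simp
  next
    case (Suc N)
    show ?case
    proof (intro allI impI)
      fix m k assume mk: "m + 2*k = Suc N"
      show "W m (Suc N) = Suc N choose k"
      proof (cases "m = 0")
        case True
        then obtain k' where k: "k = Suc k'" using mk by (cases k) auto
        have "W 0 (Suc N) = 2 * W 1 N" using R2[of "Suc N"] by simp
        also have "W 1 N = N choose k'" using Suc.IH mk True k by simp
        also have "2 * (N choose k') = Suc N choose k"
        proof -
          have "N choose Suc k' = N choose (N - Suc k')" using mk True k by (intro binomial_symmetric) simp
          also have "N - Suc k' = k'" using mk True k by simp
          finally show ?thesis using k by simp
        qed
        finally show ?thesis using True by simp
      next
        case False
        then have "W m (Suc N) = W (m-1) N + W (m+1) N" using R1[of m "Suc N"] by simp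
        also have "W (m-1) N = N choose k" using Suc.IH mk False by simp
        also have "W (m+1) N = (if k = 0 then 0 else N choose (k - 1))"
        proof (cases k)
          case 0 then show ?thesis using W_zero mk by simp
        next
          case (Suc k') then show ?thesis using Suc.IH mk by simp
        qed
        finally show ?thesis by (cases k) simp_all
      qed
    qed
  qed
  then show ?thesis by blast
qed




definition mt :: "'a set \<Rightarrow> 'a set set \<Rightarrow> bool" where
  "mt P D \<longleftrightarrow> (\<forall>e\<in>D. e \<subseteq> P \<and> card e = 2) \<and> (\<forall>p\<in>P. \<exists>!e. e \<in> D \<and> p \<in> e)"

lemma mt_image:
  assumes inj: "inj_on f P" and m: "mt P D"
  shows "mt (f`P) ((`) f ` D)"
  unfolding mt_def
proof (intro conjI ballI)
  have ar: "\<And>e. e \<in> D \<Longrightarrow> e \<subseteq> P \<and> card e = 2" using m unfolding mt_def by blast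
  fix e' assume "e' \<in> (`) f ` D"
  then obtain e where e: "e \<in> D" "e' = f ` e" by auto
  show "e' \<subseteq> f ` P" using ar[OF e(1)] e by auto
  show "card e' = 2" using ar[OF e(1)] e inj by (auto simp: card_image inj_on_subset)
next
  have ar: "\<And>e. e \<in> D \<Longrightarrow> e \<subseteq> P \<and> card e = 2" using m unfolding mt_def by blast
  have ex: "\<And>p. p \<in> P \<Longrightarrow> \<exists>!e. e \<in> D \<and> p \<in> e" using m unfolding mt_def by simp
  fix q assume "q \<in> f ` P"
  then obtain p where p: "p \<in> P" "q = f p" by auto
  obtain e where e: "e \<in> D" "p \<in> e" using ex[OF p(1)] by auto
  show "\<exists>!e'. e' \<in> (`) f ` D \<and> q \<in> e'"
  proof (rule ex1I[of _ "f ` e"])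
    show "f ` e \<in> (`) f ` D \<and> q \<in> f ` e" using e p by auto
  next
    fix e' assume "e' \<in> (`) f ` D \<and> q \<in> e'"
    then obtain g x where g: "g \<in> D" "e' = f ` g" "x \<in> g" "f x = f p" using p by auto
    have "x = p" using inj g ar[OF g(1)] p(1) by (auto dest: inj_onD)
    then have "g = e" using ex[OF p(1)] g e by auto
    then show "e' = f ` e" using g by simp
  qed
qed

lemma pmo_mt: "pmo P M \<longleftrightarrow> mt P M \<and> (\<forall>e\<in>M. \<forall>f\<in>M. \<not> crs e f)"
  by (simp add: pmo_def mt_def)

lemma tl_mt: "tl_diagram m n D \<longleftrightarrow> mt (tl_points m n) D \<and> (\<forall>e\<in>D. \<forall>f\<in>D. \<not> arcs_cross m n e f)"
  by (simp add: tl_diagram_def mt_def)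

lemma arcs_cross_crs: "arcs_cross m n e f = crs (tl_pos m n ` e) (tl_pos m n ` f)"
  by (simp add: arcs_cross_def crs_def arc_lo_def arc_hi_def)

lemma nested_nst: "arc_nested_in m n e f = nst (tl_pos m n ` e) (tl_pos m n ` f)"
  by (simp add: arc_nested_in_def nst_def arc_lo_def arc_hi_def)

definition psi :: "nat \<Rightarrow> nat \<Rightarrow> nat \<Rightarrow> pt" where
  "psi m n p = (if p < n then Top p else Bot (n + m - 1 - p))"

lemma phi_img: "tl_pos m n ` tl_points m n = {..<n+m}"
proof
  show "tl_pos m n ` tl_points m n \<subseteq> {..<n+m}" by (auto simp: tl_points_def)
  show "{..<n+m} \<subseteq> tl_pos m n ` tl_points m n"
  proof
    fix p assume p: "p \<in> {..<n+m}"
    show "p \<in> tl_pos m n ` tl_points m n"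
    proof (cases "p < n")
      case True
      then show ?thesis by (auto simp: tl_points_def image_iff intro!: bexI[of _ "Top p"])
    next
      case False
      then have "tl_pos m n (Bot (n + m - 1 - p)) = p" "Bot (n + m - 1 - p) \<in> tl_points m n"
        using p by (auto simp: tl_points_def)
      then show ?thesis by (metis image_eqI)
    qed
  qed
qed

lemma psi_phi: "x \<in> tl_points m n \<Longrightarrow> psi m n (tl_pos m n x) = x"
  by (auto simp: tl_points_def psi_def)

lemma phi_psi: "p < n + m \<Longrightarrow> tl_pos m n (psi m n p) = p"
  by (auto simp: psi_def)

lemma phi_inj: "inj_on (tl_pos m n) (tl_points m n)"
  by (metis inj_onI psi_phi)

lemma psi_inj: "inj_on (psi m n) {..<n+m}"
  by (metis inj_onI phi_psi lessThan_iff)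

lemma psi_img: "psi m n ` {..<n+m} = tl_points m n"
proof -
  have "psi m n ` tl_pos m n ` tl_points m n = tl_points m n"
    by (simp add: image_image psi_phi cong: image_cong)
  then show ?thesis by (simp add: phi_img)
qed

lemma pt_cases:
  assumes "card (e::pt set) = 2"
  shows "(\<exists>i j. e = {Bot i, Top j}) \<or> (\<exists>i i'. i \<noteq> i' \<and> e = {Bot i, Bot i'}) \<or> (\<exists>j j'. j \<noteq> j' \<and> e = {Top j, Top j'})"
proof -
  obtain x y where xy: "e = {x,y}" "x \<noteq> y" using assms by (auto simp: card_2_iff)
  show ?thesis using xy by (cases x; cases y) (auto simp: insert_commute)
qed

lemma some_bot: "(SOME i'. Bot i' \<in> {Bot i, Top j}) = i"
  by (rule some_equality) auto


lemma mt_unique: "mt P D \<Longrightarrow> e \<in> D \<Longrightarrow> f \<in> D \<Longrightarrow> p \<in> e \<Longrightarrow> p \<in> f \<Longrightarrow> e = f"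
proof -
  assume a: "mt P D" "e \<in> D" "f \<in> D" "p \<in> e" "p \<in> f"
  then have "p \<in> P" unfolding mt_def by blast
  then have "\<exists>!e. e \<in> D \<and> p \<in> e" using a(1) unfolding mt_def by simp
  then show "e = f" using a by blast
qed

lemma mt_cover: "mt P D \<Longrightarrow> p \<in> P \<Longrightarrow> \<exists>e\<in>D. p \<in> e"
  unfolding mt_def by (meson ex1E)

lemma bot_inj:
  assumes "tl_diagram m n D"
  shows "inj_on (\<lambda>e. SOME i. Bot i \<in> e) {e\<in>D. through_string e}"
proof (rule inj_onI)
  have mt: "mt (tl_points m n) D" using assms by (simp add: tl_mt)
  fix e f assume e: "e \<in> {e\<in>D. through_string e}" and f: "f \<in> {e\<in>D. through_string e}"
    and eq: "(SOME i. Bot i \<in> e) = (SOME i. Bot i \<in> f)"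
  obtain i j where ij: "e = {Bot i, Top j}" using e by (auto simp: through_string_def)
  obtain i' j' where ij': "f = {Bot i', Top j'}" using f by (auto simp: through_string_def)
  have "i = i'" using eq ij ij' some_bot by simp
  then show "e = f" using mt_unique[OF mt, of e f "Bot i"] e f ij ij' by auto
qed

lemma bot_range:
  assumes "tl_diagram m n D" "e \<in> D" "through_string e"
  shows "(SOME i. Bot i \<in> e) < m"
proof -
  obtain i j where ij: "e = {Bot i, Top j}" using assms(3) by (auto simp: through_string_def)
  have "e \<subseteq> tl_points m n" using assms by (auto simp: tl_diagram_def)
  then have "i < m" using ij by (auto simp: tl_points_def)
  then show ?thesis using ij some_bot by simp
qed

lemma through_card:
  assumes D: "tl_diagram m n D" and top: "\<forall>e\<in>D. \<exists>j. Top j \<in> e"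
  shows "card {e\<in>D. through_string e} = m"
proof -
  have mt: "mt (tl_points m n) D" using D by (simp add: tl_mt)
  have "(\<lambda>e. SOME i. Bot i \<in> e) ` {e\<in>D. through_string e} = {..<m}"
  proof
    show "(\<lambda>e. SOME i. Bot i \<in> e) ` {e\<in>D. through_string e} \<subseteq> {..<m}"
      using bot_range[OF D] by auto
    show "{..<m} \<subseteq> (\<lambda>e. SOME i. Bot i \<in> e) ` {e\<in>D. through_string e}"
    proof
      fix i assume i: "i \<in> {..<m}"
      then have "Bot i \<in> tl_points m n" by (simp add: tl_points_def)
      then obtain e where e: "e \<in> D" "Bot i \<in> e" using mt_cover[OF mt] by blast
      have "card e = 2" using mt e unfolding mt_def by blast
      moreover obtain j where j: "Top j \<in> e" using top e by blast
      ultimately have "e = {Bot i, Top j}" using pt_cases e(2) by fastforce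
      then have "through_string e" "(SOME i. Bot i \<in> e) = i" using some_bot by (auto simp: through_string_def)
      then show "i \<in> (\<lambda>e. SOME i. Bot i \<in> e) ` {e\<in>D. through_string e}" using e by force
    qed
  qed
  then have "card ((\<lambda>e. SOME i. Bot i \<in> e) ` {e\<in>D. through_string e}) = m" by simp
  then show ?thesis using card_image[OF bot_inj[OF D]] by simp
qed

lemma no_botbot:
  assumes D: "tl_diagram m n D" and c: "card {e\<in>D. through_string e} = m" and e0: "e0 \<in> D"
  shows "\<exists>j. Top j \<in> e0"
proof (rule ccontr)
  assume nt: "\<not> (\<exists>j. Top j \<in> e0)"
  have mt: "mt (tl_points m n) D" using D by (simp add: tl_mt)
  have "card e0 = 2" "e0 \<subseteq> tl_points m n" using mt e0 unfolding mt_def by blast+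
  then obtain i1 i2 where i: "i1 \<noteq> i2" "e0 = {Bot i1, Bot i2}" "i1 < m" "i2 < m"
    using pt_cases[of e0] nt by (auto simp: tl_points_def)
  let ?A = "{e\<in>D. through_string e}"
  have "(\<lambda>e. SOME i. Bot i \<in> e) ` ?A \<subseteq> {..<m} - {i1,i2}"
  proof
    fix x assume "x \<in> (\<lambda>e. SOME i. Bot i \<in> e) ` ?A"
    then obtain e where e: "e \<in> ?A" "x = (SOME i. Bot i \<in> e)" by blast
    obtain i j where ij: "e = {Bot i, Top j}" using e by (auto simp: through_string_def)
    have x: "x = i" using e ij some_bot by simp
    have "x < m" using bot_range[OF D] e by auto
    moreover have "i \<noteq> i1 \<and> i \<noteq> i2"
    proof
      show "i \<noteq> i1"
      proof
        assume "i = i1"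
        then have "e = e0" using mt_unique[OF mt, of e e0 "Bot i1"] e e0 ij i by auto
        then show False using nt ij by auto
      qed
      show "i \<noteq> i2"
      proof
        assume "i = i2"
        then have "e = e0" using mt_unique[OF mt, of e e0 "Bot i2"] e e0 ij i by auto
        then show False using nt ij by auto
      qed
    qed
    ultimately show "x \<in> {..<m} - {i1,i2}" using x by auto
  qed
  then have "card ?A \<le> card ({..<m} - {i1,i2})"
    using card_inj_on_le[OF bot_inj[OF D]] by blast
  also have "\<dots> = m - 2" using i by (simp add: card_Diff_subset)
  finally show False using c i by simp
qed


lemma phipsi_set: "e \<subseteq> {..<n+m} \<Longrightarrow> tl_pos m n ` psi m n ` e = e"
  by (auto simp: image_image phi_psi subset_iff cong: image_cong)

lemma psiphi_set: "e \<subseteq> tl_points m n \<Longrightarrow> psi m n ` tl_pos m n ` e = e"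
  by (auto simp: image_image psi_phi subset_iff cong: image_cong)

lemma Phi_in:
  assumes a: "(D,X) \<in> cell_basis t n" and m: "m = nat \<bar>t\<bar>"
  shows "((`) (tl_pos m n) ` D, (`) (tl_pos m n) ` X) \<in> SS {..<n+m} {..<n}"
proof -
  have tl: "tl_diagram m n D" and Xl: "X \<subseteq> {e. bounds_leftmost m n D e}"
    and c: "card {e\<in>D. through_string e} = m" and nt: "\<forall>e\<in>X. \<not> through_string e"
    using a m by (auto simp: cell_basis_def marked_diagram_def)
  have mt: "mt (tl_points m n) D" and nc: "\<forall>e\<in>D. \<forall>f\<in>D. \<not> arcs_cross m n e f"
    using tl by (simp_all add: tl_mt)
  have ar: "\<And>e. e \<in> D \<Longrightarrow> e \<subseteq> tl_points m n \<and> card e = 2" using mt unfolding mt_def by blast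
  have "mt {..<n+m} ((`) (tl_pos m n) ` D)"
    using mt_image[OF phi_inj mt] phi_img by metis
  moreover have "\<forall>e\<in>(`) (tl_pos m n) ` D. \<forall>f\<in>(`) (tl_pos m n) ` D. \<not> crs e f"
    using nc arcs_cross_crs by auto
  ultimately have pm: "pmo {..<n+m} ((`) (tl_pos m n) ` D)" by (simp add: pmo_mt)
  have tm: "\<forall>e\<in>(`) (tl_pos m n) ` D. e \<inter> {..<n} \<noteq> {}"
  proof
    fix e' assume "e' \<in> (`) (tl_pos m n) ` D"
    then obtain e where e: "e \<in> D" "e' = tl_pos m n ` e" by auto
    obtain j where j: "Top j \<in> e" using no_botbot[OF tl c e(1)] by blast
    have "j < n" using j ar[OF e(1)] by (auto simp: tl_points_def)
    then have "j \<in> e' \<inter> {..<n}" using j e by force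
    then show "e' \<inter> {..<n} \<noteq> {}" by blast
  qed
  have xm: "(`) (tl_pos m n) ` X \<subseteq> {e\<in>(`) (tl_pos m n) ` D. e \<subseteq> {..<n} \<and>
      \<not>(\<exists>g\<in>(`) (tl_pos m n) ` D. nst e g)}"
  proof
    fix e' assume "e' \<in> (`) (tl_pos m n) ` X"
    then obtain e where e: "e \<in> X" "e' = tl_pos m n ` e" by auto
    have eD: "e \<in> D" and nn: "\<not> (\<exists>f\<in>D. arc_nested_in m n e f)"
      using Xl e by (auto simp: bounds_leftmost_def)
    have "\<not> through_string e" using nt e by blast
    moreover obtain j where "Top j \<in> e" using no_botbot[OF tl c eD] by blast
    ultimately obtain j1 j2 where jj: "e = {Top j1, Top j2}"
      using pt_cases[of e] ar[OF eD] by (auto simp: through_string_def)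
    then have "j1 < n" "j2 < n" using ar[OF eD] by (auto simp: tl_points_def)
    then have "e' \<subseteq> {..<n}" using e jj by auto
    moreover have "\<not>(\<exists>g\<in>(`) (tl_pos m n) ` D. nst e' g)"
      using nn e nested_nst by auto
    ultimately show "e' \<in> {e\<in>(`) (tl_pos m n) ` D. e \<subseteq> {..<n} \<and>
      \<not>(\<exists>g\<in>(`) (tl_pos m n) ` D. nst e g)}" using eD e by auto
  qed
  show ?thesis using pm tm xm by (simp add: SS_def)
qed

lemma Psi_in:
  assumes a: "(M,X) \<in> SS {..<n+m} {..<n}" and m: "m = nat \<bar>t\<bar>"
  shows "((`) (psi m n) ` M, (`) (psi m n) ` X) \<in> cell_basis t n"
proof -
  have pm: "pmo {..<n+m} M" and tm: "\<forall>e\<in>M. e \<inter> {..<n} \<noteq> {}"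
    and xm: "X \<subseteq> {e\<in>M. e \<subseteq> {..<n} \<and> \<not>(\<exists>g\<in>M. nst e g)}"
    using a by (auto simp: SS_def)
  have sub: "\<And>e. e \<in> M \<Longrightarrow> e \<subseteq> {..<n+m}" using pm pmo_sub by blast
  have "mt (tl_points m n) ((`) (psi m n) ` M)"
    using mt_image[OF psi_inj[of m n], of M] pm psi_img by (metis pmo_mt)
  moreover have "\<forall>e\<in>(`) (psi m n) ` M. \<forall>f\<in>(`) (psi m n) ` M. \<not> arcs_cross m n e f"
  proof (intro ballI)
    fix e' f' assume "e' \<in> (`) (psi m n) ` M" "f' \<in> (`) (psi m n) ` M"
    then obtain e f where ef: "e \<in> M" "f \<in> M" "e' = psi m n ` e" "f' = psi m n ` f" by auto
    then show "\<not> arcs_cross m n e' f'"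
      using arcs_cross_crs phipsi_set[OF sub] pmo_ncrs[OF pm] by metis
  qed
  ultimately have tl: "tl_diagram m n ((`) (psi m n) ` M)" by (simp add: tl_mt)
  have top: "\<forall>e\<in>(`) (psi m n) ` M. \<exists>j. Top j \<in> e"
  proof
    fix e' assume "e' \<in> (`) (psi m n) ` M"
    then obtain e where e: "e \<in> M" "e' = psi m n ` e" by auto
    obtain p where "p \<in> e" "p < n" using tm e by blast
    then have "Top p \<in> e'" using e by (force simp: psi_def)
    then show "\<exists>j. Top j \<in> e'" by blast
  qed
  have Xl: "(`) (psi m n) ` X \<subseteq> {e. bounds_leftmost m n ((`) (psi m n) ` M) e}"
  proof
    fix e' assume "e' \<in> (`) (psi m n) ` X"
    then obtain e where e: "e \<in> X" "e' = psi m n ` e" by auto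
    have eM: "e \<in> M" and nn: "\<not>(\<exists>g\<in>M. nst e g)" using xm e by auto
    have "\<not> (\<exists>f'\<in>(`) (psi m n) ` M. arc_nested_in m n e' f')"
    proof
      assume "\<exists>f'\<in>(`) (psi m n) ` M. arc_nested_in m n e' f'"
      then obtain f where f: "f \<in> M" "arc_nested_in m n e' (psi m n ` f)" by auto
      then have "nst e f" using nested_nst phipsi_set[OF sub] e eM by metis
      then show False using nn f by blast
    qed
    then show "e' \<in> {e. bounds_leftmost m n ((`) (psi m n) ` M) e}"
      using eM e by (auto simp: bounds_leftmost_def)
  qed
  have nt: "\<forall>e'\<in>(`) (psi m n) ` X. \<not> through_string e'"
  proof
    fix e' assume "e' \<in> (`) (psi m n) ` X"
    then obtain e where e: "e \<in> X" "e' = psi m n ` e" by auto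
    have "e \<subseteq> {..<n}" using xm e by auto
    then have "\<forall>x\<in>e'. \<exists>j. x = Top j" using e by (auto simp: psi_def)
    then show "\<not> through_string e'" by (auto simp: through_string_def)
  qed
  show ?thesis using tl Xl nt through_card[OF tl top] m
    by (simp add: cell_basis_def marked_diagram_def)
qed

lemma cell_card: "card (cell_basis t n) = W (nat \<bar>t\<bar>) n"
proof -
  define m where "m = nat \<bar>t\<bar>"
  have "bij_betw (\<lambda>(D,X). ((`) (tl_pos m n) ` D, (`) (tl_pos m n) ` X)) (cell_basis t n) (SS {..<n+m} {..<n})"
  proof (rule bij_betw_byWitness[where f'="\<lambda>(M,X). ((`) (psi m n) ` M, (`) (psi m n) ` X)"])
    show "\<forall>a\<in>cell_basis t n. (\<lambda>(M,X). ((`) (psi m n) ` M, (`) (psi m n) ` X))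
        ((\<lambda>(D,X). ((`) (tl_pos m n) ` D, (`) (tl_pos m n) ` X)) a) = a"
    proof
      fix a assume a: "a \<in> cell_basis t n"
      obtain D X where [simp]: "a = (D,X)" by fastforce
      have tl: "tl_diagram m n D" and XD: "X \<subseteq> D"
        using a by (auto simp: cell_basis_def marked_diagram_def m_def bounds_leftmost_def)
      have h: "psi m n ` tl_pos m n ` e = e" if "e \<in> D" for e
        using psiphi_set tl that by (auto simp: tl_diagram_def)
      have h2: "psi m n ` tl_pos m n ` e = e" if "e \<in> X" for e using h XD that by blast
      have "(`) (psi m n) ` (`) (tl_pos m n) ` D = D" "(`) (psi m n) ` (`) (tl_pos m n) ` X = X"
        using h h2 by (simp_all add: image_image cong: image_cong)
      then show "(\<lambda>(M,X). ((`) (psi m n) ` M, (`) (psi m n) ` X))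
        ((\<lambda>(D,X). ((`) (tl_pos m n) ` D, (`) (tl_pos m n) ` X)) a) = a" by simp
    qed
    show "\<forall>a\<in>SS {..<n+m} {..<n}. (\<lambda>(D,X). ((`) (tl_pos m n) ` D, (`) (tl_pos m n) ` X))
        ((\<lambda>(M,X). ((`) (psi m n) ` M, (`) (psi m n) ` X)) a) = a"
    proof
      fix a assume a: "a \<in> SS {..<n+m} {..<n}"
      obtain M X where [simp]: "a = (M,X)" by fastforce
      have pm: "pmo {..<n+m} M" and XM: "X \<subseteq> M" using a by (auto simp: SS_def)
      have h: "tl_pos m n ` psi m n ` e = e" if "e \<in> M" for e
        using phipsi_set pmo_sub[OF pm that] by blast
      have h2: "tl_pos m n ` psi m n ` e = e" if "e \<in> X" for e using h XM that by blast
      have "(`) (tl_pos m n) ` (`) (psi m n) ` M = M" "(`) (tl_pos m n) ` (`) (psi m n) ` X = X"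
        using h h2 by (simp_all add: image_image cong: image_cong)
      then show "(\<lambda>(D,X). ((`) (tl_pos m n) ` D, (`) (tl_pos m n) ` X))
        ((\<lambda>(M,X). ((`) (psi m n) ` M, (`) (psi m n) ` X)) a) = a" by simp
    qed
    show "(\<lambda>(D,X). ((`) (tl_pos m n) ` D, (`) (tl_pos m n) ` X)) ` cell_basis t n \<subseteq> SS {..<n+m} {..<n}"
      using Phi_in m_def by fastforce
    show "(\<lambda>(M,X). ((`) (psi m n) ` M, (`) (psi m n) ` X)) ` SS {..<n+m} {..<n} \<subseteq> cell_basis t n"
      using Psi_in m_def by fastforce
  qed
  then show ?thesis by (simp add: bij_betw_same_card W_def m_def)
qed


theorem proposition5p5:
  fixes t :: int and k :: nat
  shows "cell_module_dim t (nat \<bar>t\<bar> + 2 * k) = (nat \<bar>t\<bar> + 2 * k) choose k"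
  by (simp add: cell_module_dim_def cell_card W_binom)

end
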